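(* Let $n\ge3$ and $\rho>0$. The function on $T(\mathbb{R}\times\mathbb{B}^n(\rho))$ $$F(x,y)=\sqrt{(1+|\overline{x}|^2)|\overline{y}|^2-\langle\overline{x},\overline{y}\rangle^2+e^{x^0}(y^0)^2}+\frac{\langle\overline{x},\overline{y}\rangle}{1+|\overline{x}|^2}$$ is a cylindrically symmetric Finsler metric with vanishing Douglas curvature.
   Context: Points $x=(x^0,\overline{x})\in\mathbb{R}\times\mathbb{B}^n(\rho)$, tangent vectors $y=(y^0,\overline{y})$, $|\cdot|,\langle\cdot,\cdot\rangle$ Euclidean on $\mathbb{R}^n$. A Finsler metric $F$ is cylindrically symmetric if $F((x^0,O\overline{x}),(y^0,O\overline{y}))=F((x^0,\overline{x}),(y^0,\overline{y}))$ for all $O\in O(n)$. The Douglas curvature is $D^A_{BCD}=\frac{\partial^3}{\partial y^B\partial y^C\partial y^D}\big(G^A-\frac{1}{n+2}\sum_{E=0}^n\frac{\partial G^E}{\partial y^E}y^A\big)$, $A,B,C,D\in\{0,\dots,n\}$, where $G^A=\frac14g^{AB}\{[F^2]_{x^Cy^B}y^C-[F^2]_{x^B}\}$ are the geodesic coefficients ($g_{AB}=\frac12[F^2]_{y^Ay^B}$, summation convention). *)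

theory Defs
  imports "HOL-Analysis.Analysis"
begin

text \<open>Coordinates are indexed by 'n option: None is the index 0 (the x^0 / y^0 coordinate),
  Some i is the i-th coordinate of the R^n part.\<close>

type_synonym 'n pt = "real \<times> (real ^ 'n)"

definition coord :: "'n::finite pt \<Rightarrow> 'n option \<Rightarrow> real" where
  "coord v A = (case A of None \<Rightarrow> fst v | Some i \<Rightarrow> snd v $ i)"

definition cbasis :: "'n option \<Rightarrow> 'n::finite pt" where
  "cbasis A = (case A of None \<Rightarrow> (1, 0) | Some i \<Rightarrow> (0, axis i 1))"

definition px :: "'n option \<Rightarrow> ('n::finite pt \<Rightarrow> 'n pt \<Rightarrow> real) \<Rightarrow> 'n pt \<Rightarrow> 'n pt \<Rightarrow> real" where
  "px A f x y = deriv (\<lambda>t. f (x + t *\<^sub>R cbasis A) y) 0"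

definition py :: "'n option \<Rightarrow> ('n::finite pt \<Rightarrow> 'n pt \<Rightarrow> real) \<Rightarrow> 'n pt \<Rightarrow> 'n pt \<Rightarrow> real" where
  "py A f x y = deriv (\<lambda>t. f x (y + t *\<^sub>R cbasis A)) 0"

definition dirder :: "'a::real_normed_vector \<Rightarrow> ('a \<Rightarrow> real) \<Rightarrow> 'a \<Rightarrow> real" where
  "dirder v f z = deriv (\<lambda>t. f (z + t *\<^sub>R v)) 0"

fun iter_dirder :: "'a::real_normed_vector list \<Rightarrow> ('a \<Rightarrow> real) \<Rightarrow> 'a \<Rightarrow> real" where
  "iter_dirder [] f = f"
| "iter_dirder (v # vs) f = dirder v (iter_dirder vs f)"

definition smooth_on :: "'a::real_normed_vector set \<Rightarrow> ('a \<Rightarrow> real) \<Rightarrow> bool" where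
  "smooth_on U f \<longleftrightarrow> open U \<and> (\<forall>vs. iter_dirder vs f differentiable_on U)"

definition slitTM :: "'n::finite pt set \<Rightarrow> ('n pt \<times> 'n pt) set" where
  "slitTM M = M \<times> (UNIV - {0})"

definition fund_tensor :: "('n::finite pt \<Rightarrow> 'n pt \<Rightarrow> real) \<Rightarrow> 'n pt \<Rightarrow> 'n pt \<Rightarrow> 'n option \<Rightarrow> 'n option \<Rightarrow> real" where
  "fund_tensor F x y A B = 1/2 * py A (py B (\<lambda>x y. (F x y)\<^sup>2)) x y"

definition finsler_metric :: "'n::finite pt set \<Rightarrow> ('n pt \<Rightarrow> 'n pt \<Rightarrow> real) \<Rightarrow> bool" where
  "finsler_metric M F \<longleftrightarrow>
     open M \<and>
     smooth_on (slitTM M) (\<lambda>z. F (fst z) (snd z)) \<and>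
     (\<forall>x\<in>M. \<forall>y. F x y \<ge> 0) \<and>
     (\<forall>x\<in>M. \<forall>y. \<forall>c>0. F x (c *\<^sub>R y) = c * F x y) \<and>
     (\<forall>x\<in>M. \<forall>y. y \<noteq> 0 \<longrightarrow>
        (\<forall>\<xi>::'n option \<Rightarrow> real. \<xi> \<noteq> (\<lambda>_. 0) \<longrightarrow>
           (\<Sum>A\<in>UNIV. \<Sum>B\<in>UNIV. fund_tensor F x y A B * \<xi> A * \<xi> B) > 0))"

definition cyl_symmetric :: "'n::finite pt set \<Rightarrow> ('n pt \<Rightarrow> 'n pt \<Rightarrow> real) \<Rightarrow> bool" where
  "cyl_symmetric M F \<longleftrightarrow>
     (\<forall>Q::real^'n^'n. orthogonal_matrix Q \<longrightarrow>
        (\<forall>x0 xb y0 yb. (x0, xb) \<in> M \<longrightarrow>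
           F (x0, Q *v xb) (y0, Q *v yb) = F (x0, xb) (y0, yb)))"

definition fund_matrix :: "('n::finite pt \<Rightarrow> 'n pt \<Rightarrow> real) \<Rightarrow> 'n pt \<Rightarrow> 'n pt \<Rightarrow> real^'n option^'n option" where
  "fund_matrix F x y = (\<chi> A B. fund_tensor F x y A B)"

definition geod_coeff :: "('n::finite pt \<Rightarrow> 'n pt \<Rightarrow> real) \<Rightarrow> 'n option \<Rightarrow> 'n pt \<Rightarrow> 'n pt \<Rightarrow> real" where
  "geod_coeff F A x y =
     (let F2 = (\<lambda>x y. (F x y)\<^sup>2); ginv = matrix_inv (fund_matrix F x y) in
      1/4 * (\<Sum>B\<in>UNIV. ginv $ A $ B *
        ((\<Sum>C\<in>UNIV. px C (py B F2) x y * coord y C) - px B F2 x y)))"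

text \<open>Douglas curvature D^A_{BCD}, with n = CARD('n) (so the manifold has dimension n+1).\<close>

definition douglas :: "('n::finite pt \<Rightarrow> 'n pt \<Rightarrow> real) \<Rightarrow> 'n option \<Rightarrow> 'n option \<Rightarrow> 'n option \<Rightarrow> 'n option \<Rightarrow> 'n pt \<Rightarrow> 'n pt \<Rightarrow> real" where
  "douglas F A B C D x y =
     py B (py C (py D (\<lambda>x y. geod_coeff F A x y
        - 1 / (real CARD('n) + 2) * (\<Sum>E\<in>UNIV. py E (geod_coeff F E) x y) * coord y A))) x y"

definition douglas_vanishes :: "'n::finite pt set \<Rightarrow> ('n pt \<Rightarrow> 'n pt \<Rightarrow> real) \<Rightarrow> bool" where
  "douglas_vanishes M F \<longleftrightarrow>
     (\<forall>x\<in>M. \<forall>y. y \<noteq> 0 \<longrightarrow> (\<forall>A B C D. douglas F A B C D x y = 0))"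

definition Fex :: "'n::finite pt \<Rightarrow> 'n pt \<Rightarrow> real" where
  "Fex x y = (case x of (x0, xb) \<Rightarrow> case y of (y0, yb) \<Rightarrow>
     sqrt ((1 + (norm xb)\<^sup>2) * (norm yb)\<^sup>2 - (xb \<bullet> yb)\<^sup>2 + exp x0 * y0\<^sup>2)
     + (xb \<bullet> yb) / (1 + (norm xb)\<^sup>2))"

end

theory Submission
  imports Defs
begin


lemma UNIV_option_eq: "(UNIV :: 'a option set) = insert None (Some ` UNIV)"
  by (auto, metis option.exhaust rangeI)

lemma sum_option: "(\<Sum>A\<in>(UNIV::'n::finite option set). f A) = f None + (\<Sum>i\<in>UNIV. f (Some i))"
  by (simp add: UNIV_option_eq sum.reindex)

lemma coord_None[simp]: "coord v None = fst v" by (simp add: coord_def)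
lemma coord_Some[simp]: "coord v (Some i) = snd v $ i" by (simp add: coord_def)
lemma cbasis_None[simp]: "cbasis None = (1, 0)" by (simp add: cbasis_def)
lemma cbasis_Some[simp]: "cbasis (Some i) = (0, axis i 1)" by (simp add: cbasis_def)

lemma coord_add[simp]: "coord (v + w) A = coord v A + coord w A"
  by (cases A) auto
lemma coord_scaleR[simp]: "coord (c *\<^sub>R v) A = c * coord v A"
  by (cases A) auto

lemma basis_exp: "(v::'n::finite pt) = (\<Sum>A\<in>UNIV. coord v A *\<^sub>R cbasis A)"
proof -
  have "(\<Sum>A\<in>UNIV. coord v A *\<^sub>R cbasis A) = (fst v, 0) + (\<Sum>i\<in>UNIV. (0, snd v $ i *\<^sub>R axis i 1))"
    by (simp add: sum_option)
  also have "(\<Sum>i\<in>UNIV. (0::real, snd v $ i *\<^sub>R axis i (1::real))) = (0, \<Sum>i\<in>UNIV. snd v $ i *\<^sub>R axis i 1)"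
    by (simp add: prod_eq_iff fst_sum snd_sum)
  also have "(\<Sum>i\<in>UNIV. snd v $ i *\<^sub>R axis i (1::real)) = snd v"
    using basis_expansion[of "snd v"] by (simp add: scalar_mult_eq_scaleR)
  finally show ?thesis by simp
qed

lemma linear_basis_sum:
  assumes "linear (f::'n::finite pt \<Rightarrow> real)"
  shows "(\<Sum>A\<in>UNIV. f (cbasis A) * coord v A) = f v"
proof -
  have "f v = f (\<Sum>A\<in>UNIV. coord v A *\<^sub>R cbasis A)" by (subst basis_exp) simp
  also have "\<dots> = (\<Sum>A\<in>UNIV. coord v A * f (cbasis A))"
    using assms by (simp add: linear_sum linear_scale)
  finally show ?thesis by (simp add: mult.commute)
qed

definition vec_of :: "('n::finite option \<Rightarrow> real) \<Rightarrow> 'n pt" where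
  "vec_of \<xi> = (\<xi> None, \<chi> i. \<xi> (Some i))"

lemma coord_vec_of[simp]: "coord (vec_of \<xi>) A = \<xi> A"
  by (cases A) (auto simp: vec_of_def)

lemma vec_of_nz: "\<xi> \<noteq> (\<lambda>_. 0) \<Longrightarrow> vec_of \<xi> \<noteq> 0"
  by (metis coord_vec_of coord_def ext zero_prod_def fst_zero snd_zero zero_index option.case_eq_if)

lemma coord_cbasis: "coord (cbasis A) B = (if A = B then 1 else 0)"
  by (cases A; cases B) (auto simp: axis_def)


definition RR :: "'n::finite pt \<Rightarrow> real" where "RR x = 1 + snd x \<bullet> snd x"
definition ss :: "'n::finite pt \<Rightarrow> 'n pt \<Rightarrow> real" where "ss x y = snd x \<bullet> snd y"
definition qq :: "'n::finite pt \<Rightarrow> real" where "qq y = snd y \<bullet> snd y"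
definition EE :: "'n::finite pt \<Rightarrow> real" where "EE x = exp (fst x)"
definition aa :: "'n::finite pt \<Rightarrow> 'n pt \<Rightarrow> 'n pt \<Rightarrow> real" where
  "aa x v w = RR x * (snd v \<bullet> snd w) - (snd x \<bullet> snd v) * (snd x \<bullet> snd w) + EE x * fst v * fst w"
definition AA :: "'n::finite pt \<Rightarrow> 'n pt \<Rightarrow> real" where "AA x y = aa x y y"
definition al :: "'n::finite pt \<Rightarrow> 'n pt \<Rightarrow> real" where "al x y = sqrt (AA x y)"
definition FF :: "'n::finite pt \<Rightarrow> 'n pt \<Rightarrow> real" where "FF x y = al x y + ss x y / RR x"

lemma RR_ge1: "RR x \<ge> 1" by (simp add: RR_def)
lemma RR_pos: "RR x > 0" using RR_ge1[of x] by linarith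
lemma EE_pos: "EE x > 0" by (simp add: EE_def)

lemma Fex_eq: "Fex x y = FF x y"
  apply (cases x; cases y)
  apply (simp add: Fex_def FF_def al_def AA_def aa_def RR_def ss_def EE_def power2_norm_eq_inner)
  apply (simp add: power2_eq_square mult.assoc)
  done

lemma aa_ge: "aa x v v \<ge> snd v \<bullet> snd v + EE x * (fst v)^2"
proof -
  have "(snd x \<bullet> snd v)^2 \<le> (snd x \<bullet> snd x) * (snd v \<bullet> snd v)" by (rule Cauchy_Schwarz_ineq)
  thus ?thesis by (simp add: aa_def RR_def power2_eq_square algebra_simps)
qed

lemma aa_pos: "v \<noteq> 0 \<Longrightarrow> aa x v v > 0"
proof -
  assume v: "v \<noteq> 0"
  have "snd v \<bullet> snd v + EE x * (fst v)^2 > 0"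
  proof (cases "snd v = 0")
    case True
    then have "fst v \<noteq> 0" using v by (simp add: prod_eq_iff)
    then show ?thesis using True EE_pos[of x] by simp
  next
    case False
    then show ?thesis using EE_pos[of x]
      by (metis add_pos_nonneg inner_gt_zero_iff mult_nonneg_nonneg less_le zero_le_power2)
  qed
  with aa_ge[where x=x and v=v] show ?thesis by linarith
qed

lemma AA_pos: "y \<noteq> 0 \<Longrightarrow> AA x y > 0" by (simp add: AA_def aa_pos)
lemma al_pos: "y \<noteq> 0 \<Longrightarrow> al x y > 0" by (simp add: al_def AA_pos)
lemma al_sq: "y \<noteq> 0 \<Longrightarrow> (al x y)^2 = AA x y"
  using AA_pos[of y x] by (simp add: al_def)

lemma beta_less: "y \<noteq> 0 \<Longrightarrow> \<bar>ss x y / RR x\<bar> < al x y"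
proof -
  assume y: "y \<noteq> 0"
  let ?R = "RR x" and ?s = "ss x y" and ?q = "qq y"
  have cs: "?s^2 \<le> (?R - 1) * ?q"
    using Cauchy_Schwarz_ineq[of "snd x" "snd y"] by (simp add: ss_def RR_def qq_def)
  have A: "AA x y \<ge> ?q + EE x * (fst y)^2" using aa_ge[where x=x and v=y] by (simp add: AA_def qq_def)
  have q0: "?q \<ge> 0" by (simp add: qq_def)
  have R1: "?R \<ge> 1" by (rule RR_ge1)
  have key: "?s^2 < ?R^2 * AA x y"
  proof (cases "?q = 0")
    case True
    then have "?s^2 \<le> 0" using cs by simp
    moreover have "AA x y > 0" using AA_pos[OF y] .
    moreover have "?R^2 > 0" using R1 by simp
    ultimately show ?thesis by (smt (verit) mult_pos_pos)
  next
    case False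
    then have qp: "?q > 0" using q0 by simp
    have "(?R - 1) * ?q < ?R^2 * ?q" using qp R1 by (simp add: power2_eq_square) (smt (verit) mult_strict_right_mono mult_le_cancel_right1)
    moreover have "?R^2 * ?q \<le> ?R^2 * AA x y"
    proof (rule mult_left_mono)
      have "EE x * (fst y)^2 \<ge> 0" using EE_pos[of x] by simp
      then show "?q \<le> AA x y" using A by linarith
    qed simp
    ultimately show ?thesis using cs by linarith
  qed
  have "\<bar>?s\<bar> < ?R * al x y"
  proof -
    have "(?R * al x y)^2 = ?R^2 * AA x y" using al_sq[OF y] by (simp add: power_mult_distrib)
    with key have "\<bar>?s\<bar>^2 < (?R * al x y)^2" by simp
    moreover have "?R * al x y \<ge> 0" using R1 al_pos[OF y, of x] by simp
    ultimately show ?thesis using power_less_imp_less_base by blast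
  qed
  thus ?thesis using R1 by (simp add: abs_div pos_divide_less_eq mult.commute)
qed

lemma FF_pos: "y \<noteq> 0 \<Longrightarrow> FF x y > 0"
proof -
  assume "y \<noteq> 0"
  from beta_less[OF this, of x] have "- al x y < ss x y / RR x" by (simp only: abs_less_iff) linarith
  thus ?thesis by (simp add: FF_def)
qed

lemma FF_zero: "FF x 0 = 0"
  by (simp add: FF_def al_def AA_def aa_def ss_def)

lemma FF_nonneg: "FF x y \<ge> 0"
  by (cases "y = 0") (auto simp: FF_zero intro: less_imp_le FF_pos)

lemma aa_scale: "aa x (c *\<^sub>R v) (c *\<^sub>R v) = c^2 * aa x v v"
  by (simp add: aa_def power2_eq_square algebra_simps)

lemma FF_hom: "c > 0 \<Longrightarrow> FF x (c *\<^sub>R y) = c * FF x y"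
  by (simp add: FF_def al_def AA_def aa_scale real_sqrt_mult ss_def algebra_simps)


definition Fv :: "'n::finite pt \<Rightarrow> 'n pt \<Rightarrow> 'n pt \<Rightarrow> real" where
  "Fv x y v = aa x y v / al x y + (snd x \<bullet> snd v) / RR x"
definition Dy :: "'n::finite pt \<Rightarrow> 'n pt \<Rightarrow> 'n pt \<Rightarrow> real" where
  "Dy v x y = 2 * FF x y * Fv x y v"
definition Dyy :: "'n::finite pt \<Rightarrow> 'n pt \<Rightarrow> 'n pt \<Rightarrow> 'n pt \<Rightarrow> real" where
  "Dyy v w x y = 2 * Fv x y v * Fv x y w
     + 2 * FF x y * (aa x v w / al x y - aa x y v * aa x y w / (al x y)^3)"
definition axc :: "'n::finite pt \<Rightarrow> 'n pt \<Rightarrow> 'n pt \<Rightarrow> real" where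
  "axc x y c = (snd x \<bullet> snd c) * qq y - ss x y * (snd c \<bullet> snd y) + EE x * fst c * (fst y)^2 / 2"
definition bc :: "'n::finite pt \<Rightarrow> 'n pt \<Rightarrow> 'n pt \<Rightarrow> real" where
  "bc x y c = (snd c \<bullet> snd y) / RR x - 2 * ss x y * (snd x \<bullet> snd c) / (RR x)^2"
definition Fc :: "'n::finite pt \<Rightarrow> 'n pt \<Rightarrow> 'n pt \<Rightarrow> real" where
  "Fc x y c = axc x y c / al x y + bc x y c"
definition Dx :: "'n::finite pt \<Rightarrow> 'n pt \<Rightarrow> 'n pt \<Rightarrow> real" where
  "Dx c x y = 2 * FF x y * Fc x y c"
definition acw :: "'n::finite pt \<Rightarrow> 'n pt \<Rightarrow> 'n pt \<Rightarrow> 'n pt \<Rightarrow> real" where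
  "acw x y c w = 2 * (snd x \<bullet> snd c) * (snd y \<bullet> snd w) - (snd c \<bullet> snd y) * (snd x \<bullet> snd w)
     - ss x y * (snd c \<bullet> snd w) + EE x * fst c * fst y * fst w"
definition Dxy :: "'n::finite pt \<Rightarrow> 'n pt \<Rightarrow> 'n pt \<Rightarrow> 'n pt \<Rightarrow> real" where
  "Dxy c w x y = 2 * Fc x y c * Fv x y w
     + 2 * FF x y * (acw x y c w / al x y - aa x y w * axc x y c / (al x y)^3
                     + (snd c \<bullet> snd w) / RR x - 2 * (snd x \<bullet> snd w) * (snd x \<bullet> snd c) / (RR x)^2)"

lemma aa_sym: "aa x v w = aa x w v"
  by (simp add: aa_def inner_commute algebra_simps)

lemma AA_alt: "AA x y = RR x * qq y - (ss x y)^2 + EE x * (fst y)^2"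
  by (simp add: AA_def aa_def qq_def ss_def power2_eq_square)

lemma AA_yline: "AA x (y + \<tau> *\<^sub>R v) = AA x y + \<tau> * (2 * aa x y v) + \<tau>^2 * aa x v v"
  by (simp add: AA_def aa_def inner_add inner_commute power2_eq_square algebra_simps)

lemma aa_yline: "aa x (y + \<tau> *\<^sub>R v) w = aa x y w + \<tau> * aa x v w"
  by (simp add: aa_def inner_add algebra_simps)

lemma ss_yline: "ss x (y + \<tau> *\<^sub>R v) = ss x y + \<tau> * (snd x \<bullet> snd v)"
  by (simp add: ss_def inner_add)

lemma sqrt_quad_deriv:
  assumes "p0 > 0"
  shows "((\<lambda>\<tau>::real. sqrt (p0 + \<tau> * p1 + \<tau>^2 * p2)) has_real_derivative p1 / (2 * sqrt p0)) (at 0)"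
  using assms by (auto intro!: derivative_eq_intros simp: divide_simps)

lemma has_al_y:
  assumes "y \<noteq> 0"
  shows "((\<lambda>\<tau>. al x (y + \<tau> *\<^sub>R v)) has_real_derivative aa x y v / al x y) (at 0)"
proof -
  have e: "(\<lambda>\<tau>. al x (y + \<tau> *\<^sub>R v)) = (\<lambda>\<tau>. sqrt (AA x y + \<tau> * (2 * aa x y v) + \<tau>^2 * aa x v v))"
    by (simp add: al_def AA_yline)
  have d: "aa x y v / al x y = 2 * aa x y v / (2 * sqrt (AA x y))" by (simp add: al_def)
  show ?thesis unfolding e d by (rule sqrt_quad_deriv[OF AA_pos[OF assms]])
qed

lemma has_FF_y:
  assumes "y \<noteq> 0"
  shows "((\<lambda>\<tau>. FF x (y + \<tau> *\<^sub>R v)) has_real_derivative Fv x y v) (at 0)"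
proof -
  note d = has_al_y[OF assms, where x=x and v=v]
  have e: "(\<lambda>\<tau>. FF x (y + \<tau> *\<^sub>R v)) = (\<lambda>\<tau>. al x (y + \<tau> *\<^sub>R v) + (ss x y + \<tau> * (snd x \<bullet> snd v)) / RR x)"
    by (simp add: FF_def ss_yline)
  show ?thesis unfolding e using RR_pos[of x]
    by (auto intro!: derivative_eq_intros d simp: Fv_def)
qed

lemma has_Dy0:
  assumes "y \<noteq> 0"
  shows "((\<lambda>\<tau>. (Fex x (y + \<tau> *\<^sub>R v))^2) has_real_derivative Dy v x y) (at 0)"
proof -
  note d = has_FF_y[OF assms, where x=x and v=v]
  show ?thesis unfolding Fex_eq
    by (auto intro!: derivative_eq_intros d simp: Dy_def)
qed

lemma has_Dyy:
  assumes "y \<noteq> 0"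
  shows "((\<lambda>\<tau>. Dy w x (y + \<tau> *\<^sub>R v)) has_real_derivative Dyy w v x y) (at 0)"
proof -
  have e: "(\<lambda>\<tau>. Dy w x (y + \<tau> *\<^sub>R v)) = (\<lambda>\<tau>. 2 * FF x (y + \<tau> *\<^sub>R v) *
       ((aa x y w + \<tau> * aa x v w) / al x (y + \<tau> *\<^sub>R v) + (snd x \<bullet> snd w) / RR x))"
    by (simp add: Dy_def Fv_def aa_yline)
  have ap: "al x y > 0" using al_pos[OF assms] .
  note d1 = has_FF_y[OF assms, where x=x and v=v]
  note d2 = has_al_y[OF assms, where x=x and v=v]
  show ?thesis unfolding e
    using ap RR_pos[of x] by (auto intro!: derivative_eq_intros d1 d2 simp: Dyy_def Fv_def aa_sym power3_eq_cube field_simps)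
qed


lemma RR_xline: "RR (x + \<tau> *\<^sub>R c) = RR x + \<tau> * (2 * (snd x \<bullet> snd c)) + \<tau>^2 * (snd c \<bullet> snd c)"
  by (simp add: RR_def inner_add inner_commute power2_eq_square algebra_simps)
lemma ss_xline: "ss (x + \<tau> *\<^sub>R c) y = ss x y + \<tau> * (snd c \<bullet> snd y)"
  by (simp add: ss_def inner_add)
lemma EE_xline: "EE (x + \<tau> *\<^sub>R c) = exp (fst x + \<tau> * fst c)"
  by (simp add: EE_def)
lemma inner_xline: "snd (x + \<tau> *\<^sub>R c) \<bullet> snd w = snd x \<bullet> snd w + \<tau> * (snd c \<bullet> snd w)"
  by (simp add: inner_add)
lemma aa_alt: "aa x y w = RR x * (snd y \<bullet> snd w) - ss x y * (snd x \<bullet> snd w) + EE x * fst y * fst w"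
  by (simp add: aa_def ss_def)

lemma has_RR_x: "((\<lambda>\<tau>. RR (x + \<tau> *\<^sub>R c)) has_real_derivative 2 * (snd x \<bullet> snd c)) (at 0)"
  unfolding RR_xline by (auto intro!: derivative_eq_intros)
lemma has_ss_x: "((\<lambda>\<tau>. ss (x + \<tau> *\<^sub>R c) y) has_real_derivative (snd c \<bullet> snd y)) (at 0)"
  unfolding ss_xline by (auto intro!: derivative_eq_intros)
lemma has_EE_x: "((\<lambda>\<tau>. EE (x + \<tau> *\<^sub>R c)) has_real_derivative EE x * fst c) (at 0)"
  unfolding EE_xline by (auto intro!: derivative_eq_intros simp: EE_def)
lemma has_inner_x: "((\<lambda>\<tau>. snd (x + \<tau> *\<^sub>R c) \<bullet> snd w) has_real_derivative (snd c \<bullet> snd w)) (at 0)"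
  unfolding inner_xline by (auto intro!: derivative_eq_intros)
lemma has_inner_x': "((\<lambda>\<tau>. (snd x + \<tau> *\<^sub>R snd c) \<bullet> w) has_real_derivative (snd c \<bullet> w)) (at 0)"
  by (auto intro!: derivative_eq_intros simp: inner_add)

lemma has_AA_x: "((\<lambda>\<tau>. AA (x + \<tau> *\<^sub>R c) y) has_real_derivative 2 * axc x y c) (at 0)"
proof -
  note d1 = has_RR_x[where x=x and c=c] and d2 = has_ss_x[where x=x and c=c and y=y]
    and d3 = has_EE_x[where x=x and c=c]
  show ?thesis unfolding AA_alt
    by (auto intro!: derivative_eq_intros d1 d2 d3 simp: axc_def ss_def algebra_simps)
qed

lemma has_al_x:
  assumes "y \<noteq> 0"
  shows "((\<lambda>\<tau>. al (x + \<tau> *\<^sub>R c) y) has_real_derivative axc x y c / al x y) (at 0)"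
proof -
  note d = has_AA_x[where x=x and c=c and y=y]
  have p: "AA x y > 0" using AA_pos[OF assms] .
  show ?thesis unfolding al_def using p
    by (auto intro!: derivative_eq_intros d simp: divide_simps)
qed

lemma has_FF_x:
  assumes "y \<noteq> 0"
  shows "((\<lambda>\<tau>. FF (x + \<tau> *\<^sub>R c) y) has_real_derivative Fc x y c) (at 0)"
proof -
  note d1 = has_RR_x[where x=x and c=c] and d2 = has_ss_x[where x=x and c=c and y=y]
    and d3 = has_al_x[OF assms, where x=x and c=c] and d4 = has_inner_x'[where x=x and c=c and w="snd y"]
  show ?thesis unfolding FF_def using RR_pos[of x]
    by (auto intro!: derivative_eq_intros d1 d2 d3 d4 simp: Fc_def bc_def ss_def power2_eq_square field_simps)
qed

lemma has_Dx0:
  assumes "y \<noteq> 0"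
  shows "((\<lambda>\<tau>. (Fex (x + \<tau> *\<^sub>R c) y)^2) has_real_derivative Dx c x y) (at 0)"
proof -
  note d = has_FF_x[OF assms, where x=x and c=c]
  show ?thesis unfolding Fex_eq
    by (auto intro!: derivative_eq_intros d simp: Dx_def)
qed

lemma has_aa_x: "((\<lambda>\<tau>. aa (x + \<tau> *\<^sub>R c) y w) has_real_derivative acw x y c w) (at 0)"
proof -
  note d1 = has_RR_x[where x=x and c=c] and d2 = has_ss_x[where x=x and c=c and y=y]
    and d3 = has_EE_x[where x=x and c=c] and d4 = has_inner_x[where x=x and c=c and w=w]
  show ?thesis unfolding aa_alt
    by (auto intro!: derivative_eq_intros d1 d2 d3 d4 simp: acw_def ss_def algebra_simps)
qed

lemma has_Dxy:
  assumes "y \<noteq> 0"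
  shows "((\<lambda>\<tau>. Dy w (x + \<tau> *\<^sub>R c) y) has_real_derivative Dxy c w x y) (at 0)"
proof -
  note d1 = has_RR_x[where x=x and c=c] and d2 = has_aa_x[where x=x and c=c and y=y and w=w]
    and d3 = has_al_x[OF assms, where x=x and c=c] and d4 = has_inner_x'[where x=x and c=c and w="snd w"]
    and d5 = has_FF_x[OF assms, where x=x and c=c]
  have ap: "al x y > 0" using al_pos[OF assms] .
  show ?thesis unfolding Dy_def Fv_def using ap RR_pos[of x]
    by (auto intro!: derivative_eq_intros d1 d2 d3 d4 d5 simp: Dxy_def Fv_def power3_eq_cube power2_eq_square field_simps)
qed


lemma line_eventually:
  fixes y v :: "'a::real_normed_vector"
  assumes "open S" "y \<in> S"
  shows "eventually (\<lambda>\<tau>::real. y + \<tau> *\<^sub>R v \<in> S) (nhds 0)"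
proof -
  have "((\<lambda>\<tau>::real. y + \<tau> *\<^sub>R v) \<longlongrightarrow> y + 0 *\<^sub>R v) (nhds 0)"
    by (intro tendsto_intros) (simp add: tendsto_ident_at filterlim_ident)
  then have "((\<lambda>\<tau>::real. y + \<tau> *\<^sub>R v) \<longlongrightarrow> y) (nhds 0)" by simp
  from topological_tendstoD[OF this assms] show ?thesis .
qed

lemma deriv_line_local:
  fixes y v :: "'a::real_normed_vector"
  assumes "open S" "y \<in> S" "\<And>z. z \<in> S \<Longrightarrow> f z = g z"
  shows "deriv (\<lambda>\<tau>. f (y + \<tau> *\<^sub>R v)) 0 = deriv (\<lambda>\<tau>. g (y + \<tau> *\<^sub>R v)) 0"
  by (rule deriv_cong_ev[OF eventually_mono[OF line_eventually[OF assms(1,2), where v=v]]]) (auto simp: assms(3))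

lemma py_local:
  assumes "open S" "y \<in> S" "\<And>z. z \<in> S \<Longrightarrow> f x z = g x z"
  shows "py A f x y = py A g x y"
  unfolding py_def by (rule deriv_line_local[OF assms(1,2)]) (simp add: assms(3))

lemma open_nz: "open (UNIV - {0::'a::real_normed_vector})"
  by (simp add: open_Diff)

abbreviation Phi :: "'n::finite pt \<Rightarrow> 'n pt \<Rightarrow> real" where
  "Phi \<equiv> (\<lambda>x y. (Fex x y)^2)"

lemma py_Phi: "y \<noteq> 0 \<Longrightarrow> py B Phi x y = Dy (cbasis B) x y"
  unfolding py_def by (rule DERIV_imp_deriv) (rule has_Dy0)

lemma pyy_Phi:
  assumes "y \<noteq> 0"
  shows "py A (py B Phi) x y = Dyy (cbasis B) (cbasis A) x y"
proof -
  have "py A (py B Phi) x y = py A (\<lambda>x y. Dy (cbasis B) x y) x y"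
    by (rule py_local[OF open_nz]) (simp_all add: assms py_Phi)
  also have "\<dots> = Dyy (cbasis B) (cbasis A) x y"
    unfolding py_def by (rule DERIV_imp_deriv) (rule has_Dyy[OF assms])
  finally show ?thesis .
qed

lemma px_Phi: "y \<noteq> 0 \<Longrightarrow> px B Phi x y = Dx (cbasis B) x y"
  unfolding px_def by (rule DERIV_imp_deriv) (rule has_Dx0)

lemma pxy_Phi:
  assumes "y \<noteq> 0"
  shows "px C (py B Phi) x y = Dxy (cbasis C) (cbasis B) x y"
proof -
  have "(\<lambda>\<tau>. py B Phi (x + \<tau> *\<^sub>R cbasis C) y) = (\<lambda>\<tau>. Dy (cbasis B) (x + \<tau> *\<^sub>R cbasis C) y)"
    by (rule ext) (simp add: assms py_Phi)
  then show ?thesis unfolding px_def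
    by (simp add: DERIV_imp_deriv[OF has_Dxy[OF assms]])
qed

lemma fund_tensor_eq:
  "y \<noteq> 0 \<Longrightarrow> fund_tensor Fex x y A B = Dyy (cbasis B) (cbasis A) x y / 2"
  unfolding fund_tensor_def using pyy_Phi by simp

lemma bl_div[bounded_linear_intros]: "bounded_linear f \<Longrightarrow> bounded_linear (\<lambda>x. f x / (c::real))"
  by (rule bounded_linear_compose[OF bounded_linear_divide])

lemma linear_Dyy1: "linear (\<lambda>v. Dyy v w x y)"
proof -
  have "bounded_linear (\<lambda>v. Dyy v w x y)"
    unfolding Dyy_def Fv_def aa_def by (auto intro!: bounded_linear_intros)
  then show ?thesis by (rule bounded_linear.linear)
qed

lemma linear_Dyy2: "linear (\<lambda>w. Dyy v w x y)"
proof -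
  have "bounded_linear (\<lambda>w. Dyy v w x y)"
    unfolding Dyy_def Fv_def aa_def by (auto intro!: bounded_linear_intros)
  then show ?thesis by (rule bounded_linear.linear)
qed

lemma linear_Dxy1: "linear (\<lambda>c. Dxy c w x y)"
proof -
  have "bounded_linear (\<lambda>c. Dxy c w x y)"
    unfolding Dxy_def Fc_def axc_def bc_def acw_def
    by (auto intro!: bounded_linear_intros)
  then show ?thesis by (rule bounded_linear.linear)
qed


lemma spray_scalar:
 fixes R s q E u al a b wz F Ap P Hz XH YH WH ayw ayH aHw FvH Fvw Fcy acyw Fcw axy :: real
 assumes R: "R > 0" and al: "al > 0" and A: "al^2 = R*q - s^2 + E*u^2" and Fp: "F > 0"
 and d: "F = al + s/R" "Ap = R*q - s^2" "P = (q/R - 2* s^2/R^2 - 2*(s^2 - Ap*(R-1))/R^2)/(2*F)"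
   "Hz = u^2/4 + P*u" "XH = (s* s - Ap*(R-1))/R + P* s" "YH = (s*q - Ap* s)/R + P*q" "WH = (s*b - Ap*a)/R + P*b"
   "ayw = R*b - s*a + E*u*wz" "ayH = R*YH - s*XH + E*u*Hz" "aHw = R*WH - XH*a + E*Hz*wz"
   "FvH = ayH/al + XH/R" "Fvw = ayw/al + a/R"
   "axy = E*u^3/2" "Fcy = axy/al + q/R - 2* s^2/R^2"
   "acyw = s*b - q*a + E*u^2*wz" "Fcw = (a*q - s*b + E*wz*u^2/2)/al + b/R - 2* s*a/R^2"
 shows "2*(2*FvH*Fvw + 2*F*(aHw/al - ayH*ayw/al^3)) = (2*Fcy*Fvw + 2*F*(acyw/al - ayw*axy/al^3 + b/R - 2*a* s/R^2)) - 2*F*Fcw"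
proof -
  have F: "F * R = al * R + s" using d(1) R by (simp add: field_simps)
  have P0: "P * (2*F) = q/R - 2* s^2/R^2 - 2*(s^2 - Ap*(R-1))/R^2" using d(3) Fp by simp
  have P: "2 * F * P * R^2 = q*R - 2* s^2 - 2*(s^2 - Ap*(R-1))"
  proof -
    have "2 * F * P * R^2 = (P * (2*F)) * R^2" by simp
    also have "\<dots> = q*R - 2* s^2 - 2*(s^2 - Ap*(R-1))" unfolding P0 using R by (simp add: field_simps power2_eq_square)
    finally show ?thesis .
  qed
  show ?thesis
    unfolding d(4-16)
    using R al Fp
    apply (simp add: field_simps)
    using F P A d(2) by algebra
qed


lemma aa_eta: "aa x (v - l *\<^sub>R y) (v - l *\<^sub>R y) = aa x v v - 2 * l * aa x y v + l^2 * aa x y y"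
  by (simp add: aa_def inner_diff inner_commute power2_eq_square algebra_simps)

lemma Fv_y: "y \<noteq> 0 \<Longrightarrow> Fv x y y = FF x y"
proof -
  assume y: "y \<noteq> 0"
  have "aa x y y / al x y = al x y" using al_sq[OF y, of x] al_pos[OF y, of x]
    by (simp add: AA_def power2_eq_square field_simps)
  then show ?thesis by (simp add: Fv_def FF_def ss_def)
qed

lemma Fv_scale: "Fv x y (l *\<^sub>R v) = l * Fv x y v"
  by (simp add: Fv_def aa_def algebra_simps add_divide_distrib)

lemma Dyy_pos:
  assumes y: "y \<noteq> 0" and v: "v \<noteq> 0"
  shows "Dyy v v x y > 0"
proof -
  define l where "l = aa x y v / AA x y"
  define \<eta> where "\<eta> = v - l *\<^sub>R y"
  have A: "AA x y > 0" using AA_pos[OF y] .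
  have ap: "al x y > 0" using al_pos[OF y] .
  have sq: "(al x y)^2 = AA x y" using al_sq[OF y] .
  have F: "FF x y > 0" using FF_pos[OF y] .
  have eta: "aa x \<eta> \<eta> = aa x v v - (aa x y v)^2 / AA x y"
    unfolding \<eta>_def aa_eta l_def using A by (simp add: AA_def power2_eq_square field_simps)
  have key: "aa x v v / al x y - aa x y v * aa x v y / (al x y)^3 = aa x \<eta> \<eta> / al x y"
    unfolding eta using ap sq by (simp add: aa_sym power2_eq_square power3_eq_cube field_simps)
  have D: "Dyy v v x y = 2 * (Fv x y v)^2 + 2 * FF x y * (aa x \<eta> \<eta> / al x y)"
    unfolding Dyy_def key[symmetric] by (simp add: power2_eq_square aa_sym)
  show ?thesis
  proof (cases "\<eta> = 0")
    case False
    have "aa x \<eta> \<eta> > 0" using aa_pos[OF False] .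
    then have "2 * FF x y * (aa x \<eta> \<eta> / al x y) > 0" using F ap by simp
    then show ?thesis unfolding D by (smt (verit) zero_le_power2)
  next
    case True
    then have vl: "v = l *\<^sub>R y" unfolding \<eta>_def by simp
    then have "l \<noteq> 0" using v by auto
    then have "Fv x y v \<noteq> 0" using F by (simp add: vl Fv_scale Fv_y[OF y])
    then have "(Fv x y v)^2 > 0" by simp
    moreover have "aa x \<eta> \<eta> = 0" using True by (simp add: aa_def)
    ultimately show ?thesis unfolding D by simp
  qed
qed

lemma quad_form_eq:
  assumes y: "y \<noteq> 0"
  shows "(\<Sum>A\<in>UNIV. \<Sum>B\<in>UNIV. fund_tensor Fex x y A B * \<xi> A * \<xi> B) = Dyy (vec_of \<xi>) (vec_of \<xi>) x y / 2"
proof -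
  have "(\<Sum>A\<in>UNIV. \<Sum>B\<in>UNIV. fund_tensor Fex x y A B * \<xi> A * \<xi> B)
      = (\<Sum>A\<in>UNIV. \<xi> A / 2 * (\<Sum>B\<in>UNIV. Dyy (cbasis B) (cbasis A) x y * coord (vec_of \<xi>) B))"
    by (simp add: fund_tensor_eq[OF y] sum_distrib_left algebra_simps)
  also have "\<dots> = (\<Sum>A\<in>UNIV. Dyy (vec_of \<xi>) (cbasis A) x y * coord (vec_of \<xi>) A) / 2"
  proof -
    have i: "\<And>A. (\<Sum>B\<in>UNIV. Dyy (cbasis B) (cbasis A) x y * coord (vec_of \<xi>) B) = Dyy (vec_of \<xi>) (cbasis A) x y"
      by (rule linear_basis_sum[OF linear_Dyy1])
    show ?thesis unfolding i by (simp add: sum_divide_distrib mult.commute)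
  qed
  also have "\<dots> = Dyy (vec_of \<xi>) (vec_of \<xi>) x y / 2"
    using linear_basis_sum[OF linear_Dyy2, of "vec_of \<xi>" x y "vec_of \<xi>"] by simp
  finally show ?thesis .
qed

lemma fund_pos:
  assumes "y \<noteq> 0" "\<xi> \<noteq> (\<lambda>_. 0)"
  shows "(\<Sum>A\<in>UNIV. \<Sum>B\<in>UNIV. fund_tensor Fex x y A B * \<xi> A * \<xi> B) > 0"
  unfolding quad_form_eq[OF assms(1)] using Dyy_pos[OF assms(1) vec_of_nz[OF assms(2)]] by simp


definition Gv :: "'n::finite pt \<Rightarrow> 'n pt \<Rightarrow> 'n pt" where
  "Gv x y = ((fst y)^2 / 4,
     (1 / RR x) *\<^sub>R (ss x y *\<^sub>R snd y - (RR x * qq y - (ss x y)^2) *\<^sub>R snd x))"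
definition Nf :: "'n::finite pt \<Rightarrow> 'n pt \<Rightarrow> real" where
  "Nf x y = qq y / RR x - 2 * (ss x y)^2 / (RR x)^2
     - 2 * ((ss x y)^2 - (RR x * qq y - (ss x y)^2) * (RR x - 1)) / (RR x)^2"
definition Pf :: "'n::finite pt \<Rightarrow> 'n pt \<Rightarrow> real" where
  "Pf x y = Nf x y / (2 * FF x y)"
definition Hf :: "'n::finite pt \<Rightarrow> 'n pt \<Rightarrow> 'n pt" where
  "Hf x y = Gv x y + Pf x y *\<^sub>R y"

lemma XX: "snd x \<bullet> snd x = RR x - 1" by (simp add: RR_def)

lemma spray_id:
  assumes y: "y \<noteq> 0"
  shows "2 * Dyy (Hf x y) w x y = Dxy y w x y - Dx w x y"
proof -
  have R: "RR x > 0" by (rule RR_pos)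
  note S = spray_scalar[where R="RR x" and al="al x y" and q="qq y" and s="ss x y" and E="EE x" and u="fst y"
     and F="FF x y" and Ap="RR x * qq y - (ss x y)^2" and P="Pf x y" and Hz="fst (Hf x y)"
     and XH="snd x \<bullet> snd (Hf x y)" and YH="snd y \<bullet> snd (Hf x y)" and WH="snd (Hf x y) \<bullet> snd w"
     and b="snd y \<bullet> snd w" and a="snd x \<bullet> snd w" and ayw="aa x y w" and wz="fst w"
     and ayH="aa x y (Hf x y)" and aHw="aa x (Hf x y) w" and FvH="Fv x y (Hf x y)" and Fvw="Fv x y w"
     and axy="axc x y y" and Fcy="Fc x y y" and acyw="acw x y y w" and Fcw="Fc x y w"]
  have ap: "al x y > 0" by (rule al_pos[OF y])
  have X: "2*(2*Fv x y (Hf x y)*Fv x y w + 2*FF x y*(aa x (Hf x y) w/al x y - aa x y (Hf x y)*aa x y w/(al x y)^3))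
     = (2*Fc x y y*Fv x y w + 2*FF x y*(acw x y y w/al x y - aa x y w*axc x y y/(al x y)^3
         + (snd y \<bullet> snd w)/RR x - 2*(snd x \<bullet> snd w) * ss x y/(RR x)^2)) - 2*FF x y*Fc x y w"
    apply (rule S)
    using R ap FF_pos[OF y, of x] al_sq[OF y, of x]
    apply (simp_all add: AA_alt FF_def Pf_def Nf_def Hf_def Gv_def inner_add_left inner_add_right inner_diff_left
       inner_diff_right aa_def Fv_def Fc_def axc_def bc_def acw_def ss_def qq_def XX inner_commute power2_eq_square power3_eq_cube)
    done
  show ?thesis using X by (simp add: Dyy_def Dxy_def Dx_def ss_def)
qed


lemma vec_of_coord: "vec_of (coord v) = v"
  by (cases v) (simp add: vec_of_def coord_def vec_eq_iff)

lemma fund_mv: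
  assumes y: "y \<noteq> 0"
  shows "(fund_matrix Fex x y *v z) $ A = Dyy (vec_of (\<lambda>B. z $ B)) (cbasis A) x y / 2"
proof -
  have "(fund_matrix Fex x y *v z) $ A = (\<Sum>B\<in>UNIV. Dyy (cbasis B) (cbasis A) x y * coord (vec_of (\<lambda>B. z $ B)) B) / 2"
    by (simp add: matrix_vector_mult_def fund_matrix_def fund_tensor_eq[OF y] sum_divide_distrib)
  also have "\<dots> = Dyy (vec_of (\<lambda>B. z $ B)) (cbasis A) x y / 2"
  proof -
    have "linear (\<lambda>v. Dyy v (cbasis A) x y)" by (rule linear_Dyy1)
    from linear_basis_sum[OF this, of "vec_of (\<lambda>B. z $ B)"] show ?thesis by simp
  qed
  finally show ?thesis .
qed

lemma fund_ker:
  assumes y: "y \<noteq> 0" and z: "fund_matrix Fex x y *v z = 0"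
  shows "z = 0"
proof (rule ccontr)
  assume nz: "z \<noteq> 0"
  let ?\<xi> = "\<lambda>B. z $ B"
  have xi: "?\<xi> \<noteq> (\<lambda>_. 0)" using nz by (auto simp: vec_eq_iff)
  have "(\<Sum>A\<in>UNIV. \<Sum>B\<in>UNIV. fund_tensor Fex x y A B * ?\<xi> A * ?\<xi> B)
      = (\<Sum>A\<in>UNIV. ?\<xi> A * (fund_matrix Fex x y *v z) $ A)"
    by (simp add: matrix_vector_mult_def fund_matrix_def sum_distrib_left algebra_simps)
  also have "\<dots> = 0" using z by simp
  finally show False using fund_pos[OF y xi, of x] by simp
qed

lemma fund_inv:
  assumes y: "y \<noteq> 0"
  shows "matrix_inv (fund_matrix Fex x y) ** fund_matrix Fex x y = mat 1"
proof -
  have "invertible (fund_matrix Fex x y)"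
    unfolding invertible_left_inverse matrix_left_invertible_ker using fund_ker[OF y] by blast
  then obtain A' where "fund_matrix Fex x y ** A' = mat 1 \<and> A' ** fund_matrix Fex x y = mat 1"
    unfolding invertible_def by blast
  then show ?thesis unfolding matrix_inv_def by (rule someI2) simp
qed

lemma geod_closed:
  assumes y: "y \<noteq> 0"
  shows "geod_coeff Fex A x y = coord (Hf x y) A"
proof -
  let ?g = "fund_matrix Fex x y"
  define hv :: "real ^ 'a option" where "hv = (\<chi> A. coord (Hf x y) A)"
  define rv :: "real ^ 'a option" where
    "rv = (\<chi> A. (\<Sum>C\<in>UNIV. px C (py A Phi) x y * coord y C) - px A Phi x y)"
  have rv: "rv $ A = Dxy y (cbasis A) x y - Dx (cbasis A) x y" for A
  proof -
    have "rv $ A = (\<Sum>C\<in>UNIV. Dxy (cbasis C) (cbasis A) x y * coord y C) - Dx (cbasis A) x y"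
      by (simp add: rv_def pxy_Phi[OF y] px_Phi[OF y])
    moreover have "linear (\<lambda>c. Dxy c (cbasis A) x y)" by (rule linear_Dxy1)
    ultimately show ?thesis using linear_basis_sum[of "\<lambda>c. Dxy c (cbasis A) x y" y] by simp
  qed
  have vh: "vec_of (\<lambda>B. hv $ B) = Hf x y" by (simp add: hv_def vec_of_coord)
  have ghv: "?g *v hv = (1/4) *\<^sub>R rv"
  proof (subst vec_eq_iff, intro allI)
    fix A
    have "(?g *v hv) $ A = Dyy (Hf x y) (cbasis A) x y / 2" using fund_mv[OF y, of x hv A] vh by simp
    also have "\<dots> = ((1/4) *\<^sub>R rv) $ A" using spray_id[OF y, of x "cbasis A"] rv[of A] by simp
    finally show "(?g *v hv) $ A = ((1/4) *\<^sub>R rv) $ A" .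
  qed
  have "hv = matrix_inv ?g *v (?g *v hv)"
    by (simp add: matrix_vector_mul_assoc fund_inv[OF y])
  also have "\<dots> = matrix_inv ?g *v ((1/4) *\<^sub>R rv)" by (simp add: ghv)
  finally have "hv $ A = (matrix_inv ?g *v ((1/4) *\<^sub>R rv)) $ A" by simp
  then have "coord (Hf x y) A = (\<Sum>B\<in>UNIV. matrix_inv ?g $ A $ B * (1/4 * rv $ B))"
    by (simp add: hv_def matrix_vector_mult_def)
  then show ?thesis
    by (simp add: geod_coeff_def Let_def rv_def sum_distrib_left algebra_simps)
qed


inductive polyy :: "nat \<Rightarrow> ('n::finite pt \<Rightarrow> 'n pt \<Rightarrow> real) \<Rightarrow> bool" where
  pconst: "polyy k (\<lambda>x y. c x)"
| padd: "polyy k f \<Longrightarrow> polyy k g \<Longrightarrow> polyy k (\<lambda>x y. f x y + g x y)"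
| pmul: "polyy k f \<Longrightarrow> polyy (Suc k) (\<lambda>x y. f x y * coord y A)"

lemma polyy_cong: "polyy k f \<Longrightarrow> (\<And>x y. f x y = g x y) \<Longrightarrow> polyy k g"
proof -
  assume "polyy k f" "\<And>x y. f x y = g x y"
  moreover have "f = g" using \<open>\<And>x y. f x y = g x y\<close> by (intro ext)
  ultimately show ?thesis by simp
qed

lemma polyy_cmul: "polyy k f \<Longrightarrow> polyy k (\<lambda>x y. c x * f x y)"
proof (induction rule: polyy.induct)
  case (pconst k d)
  then show ?case using polyy.pconst[of k "\<lambda>x. c x * d x"] by simp
next
  case (padd k f g)
  then show ?case using polyy.padd[OF padd.IH] by (simp add: distrib_left)
next
  case (pmul k f A)
  then show ?case using polyy.pmul[OF pmul.IH, of A] by (simp add: mult.assoc)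
qed

lemma polyy_diff: "polyy k f \<Longrightarrow> polyy k g \<Longrightarrow> polyy k (\<lambda>x y. f x y - g x y)"
  using polyy.padd[of k f "\<lambda>x y. (-1) * g x y"] polyy_cmul[of k g "\<lambda>x. -1"] by simp

lemma polyy_mono: "polyy k f \<Longrightarrow> k \<le> m \<Longrightarrow> polyy m f"
proof (induction arbitrary: m rule: polyy.induct)
  case (pconst k c)
  show ?case by (rule polyy.pconst)
next
  case (padd k f g)
  then show ?case by (simp add: polyy.padd)
next
  case (pmul k f A)
  then obtain m' where "m = Suc m'" "k \<le> m'" by (cases m) auto
  then show ?case using pmul.IH polyy.pmul by blast
qed

lemma polyy_mult: "polyy a f \<Longrightarrow> polyy b g \<Longrightarrow> polyy (a + b) (\<lambda>x y. f x y * g x y)"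
proof (induction rule: polyy.induct)
  case (pconst k c)
  then show ?case using polyy_mono[OF polyy_cmul[OF pconst, of c], of "k + b"] by simp
next
  case (padd k f1 f2)
  then show ?case using polyy.padd[OF padd.IH] by (simp add: distrib_right)
next
  case (pmul k f A)
  have "polyy (Suc (k + b)) (\<lambda>x y. (f x y * g x y) * coord y A)" by (rule polyy.pmul[OF pmul.IH[OF pmul.prems]])
  then have "polyy (Suc k + b) (\<lambda>x y. (f x y * g x y) * coord y A)" by simp
  then show ?case by (rule polyy_cong) (simp add: algebra_simps)
qed


lemma polyy_sum: "finite S \<Longrightarrow> (\<And>i. i \<in> S \<Longrightarrow> polyy k (f i)) \<Longrightarrow> polyy k (\<lambda>x y. \<Sum>i\<in>S. f i x y)"
proof (induction S rule: finite_induct)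
  case empty
  then show ?case using polyy.pconst[of k "\<lambda>x. 0"] by simp
next
  case (insert i S)
  then show ?case using polyy.padd[of k "f i" "\<lambda>x y. \<Sum>i\<in>S. f i x y"] by simp
qed

lemma polyy_indep: "polyy k f \<Longrightarrow> k = 0 \<Longrightarrow> f x y = f x y'"
  by (induction rule: polyy.induct) auto

lemma coord_line: "coord (y + \<tau> *\<^sub>R v) A = coord y A + \<tau> * coord v A"
  by simp

lemma polyy_deriv:
  "polyy k f \<Longrightarrow> \<exists>g. polyy (k - 1) g \<and> (\<forall>x y. ((\<lambda>\<tau>. f x (y + \<tau> *\<^sub>R v)) has_real_derivative g x y) (at 0))"
proof (induction rule: polyy.induct)
  case (pconst k c)
  show ?case by (rule exI[of _ "\<lambda>x y. 0"]) (auto intro: polyy.pconst[of _ "\<lambda>x. 0", simplified])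
next
  case (padd k f1 f2)
  then obtain g1 g2 where g1: "polyy (k - 1) g1" "\<forall>x y. ((\<lambda>\<tau>. f1 x (y + \<tau> *\<^sub>R v)) has_real_derivative g1 x y) (at 0)"
    and g2: "polyy (k - 1) g2" "\<forall>x y. ((\<lambda>\<tau>. f2 x (y + \<tau> *\<^sub>R v)) has_real_derivative g2 x y) (at 0)" by blast
  have p: "polyy (k - 1) (\<lambda>x y. g1 x y + g2 x y)" by (rule polyy.padd[OF g1(1) g2(1)])
  have "((\<lambda>\<tau>. f1 x (y + \<tau> *\<^sub>R v) + f2 x (y + \<tau> *\<^sub>R v)) has_real_derivative g1 x y + g2 x y) (at 0)" for x y
    by (rule DERIV_add[OF g1(2)[rule_format] g2(2)[rule_format]])
  then show ?case using p by blast
next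
  case (pmul k f A)
  then obtain g where g: "polyy (k - 1) g" "\<forall>x y. ((\<lambda>\<tau>. f x (y + \<tau> *\<^sub>R v)) has_real_derivative g x y) (at 0)"
    by blast
  show ?case
  proof (cases "k = 0")
    case True
    have ind: "f x (y + \<tau> *\<^sub>R v) = f x y" for x y \<tau> using polyy_indep[OF pmul.hyps True] .
    have "polyy 0 (\<lambda>x y. coord v A * f x y)" using polyy_cmul[OF pmul.hyps, of "\<lambda>x. coord v A"] True by simp
    moreover have "((\<lambda>\<tau>. f x (y + \<tau> *\<^sub>R v) * coord (y + \<tau> *\<^sub>R v) A) has_real_derivative coord v A * f x y) (at 0)" for x y
      unfolding ind coord_line by (auto intro!: derivative_eq_intros)
    ultimately show ?thesis using True by auto
  next
    case False
    have p1: "polyy k (\<lambda>x y. g x y * coord y A)" using polyy.pmul[OF g(1), of A] False by simp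
    have p2: "polyy k (\<lambda>x y. coord v A * f x y)" using polyy_cmul[OF pmul.hyps, of "\<lambda>x. coord v A"] by simp
    have "((\<lambda>\<tau>. f x (y + \<tau> *\<^sub>R v) * coord (y + \<tau> *\<^sub>R v) A) has_real_derivative g x y * coord y A + coord v A * f x y) (at 0)" for x y
      unfolding coord_line by (auto intro!: derivative_eq_intros g(2)[rule_format])
    then show ?thesis using polyy.padd[OF p1 p2] by auto
  qed
qed

lemma polyy_py:
  assumes "polyy (Suc k) f"
  shows "\<exists>g. polyy k g \<and> py A f = g"
proof -
  obtain g where g: "polyy k g" "\<forall>x y. ((\<lambda>\<tau>. f x (y + \<tau> *\<^sub>R cbasis A)) has_real_derivative g x y) (at 0)"
    using polyy_deriv[OF assms, of "cbasis A"] by auto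
  have "py A f = g" unfolding py_def by (intro ext DERIV_imp_deriv g(2)[rule_format])
  then show ?thesis using g(1) by blast
qed

lemma polyy_py0:
  assumes "polyy 0 f"
  shows "py A f x y = 0"
proof -
  have "(\<lambda>\<tau>. f x (y + \<tau> *\<^sub>R cbasis A)) = (\<lambda>\<tau>. f x y)" by (intro ext) (rule polyy_indep[OF assms refl])
  then show ?thesis by (simp add: py_def)
qed

lemma polyy_ss: "polyy 1 (\<lambda>x y. ss x y)"
proof -
  have "polyy 1 (\<lambda>x y. \<Sum>j\<in>UNIV. snd x $ j * coord y (Some j))"
  proof (rule polyy_sum)
    fix j show "polyy 1 (\<lambda>x y. snd x $ j * coord y (Some j))"
      using polyy.pmul[OF polyy.pconst[of 0 "\<lambda>x. snd x $ j"], of "Some j"] by simp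
  qed simp
  then show ?thesis by (rule polyy_cong) (simp add: ss_def inner_vec_def)
qed

lemma polyy_qq: "polyy 2 (\<lambda>x y. qq y)"
proof -
  have "polyy 2 (\<lambda>x y. \<Sum>j\<in>UNIV. (1 * coord y (Some j)) * coord y (Some j))"
  proof (rule polyy_sum)
    fix j show "polyy 2 (\<lambda>x y. (1 * coord y (Some j)) * coord y (Some j))"
      using polyy.pmul[OF polyy.pmul[OF polyy.pconst[of 0 "\<lambda>x. 1"], of "Some j"], of "Some j"]
      by (simp add: numeral_2_eq_2)
  qed simp
  then show ?thesis by (rule polyy_cong) (simp add: qq_def inner_vec_def)
qed

lemma polyy_Gv: "polyy 2 (\<lambda>x y. coord (Gv x y) A)"
proof (cases A)
  case None
  have "polyy 2 (\<lambda>x y. ((1/4) * coord y None) * coord y None)"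
    using polyy.pmul[OF polyy.pmul[OF polyy.pconst[of 0 "\<lambda>x. 1/4"], of None], of None] by (simp add: numeral_2_eq_2)
  then show ?thesis using None by (rule_tac polyy_cong) (auto simp: Gv_def power2_eq_square)
next
  case (Some i)
  have a: "polyy 2 (\<lambda>x y. ss x y * coord y (Some i))" using polyy.pmul[OF polyy_ss, of "Some i"] by (simp add: numeral_2_eq_2)
  have b: "polyy 2 (\<lambda>x y. RR x * qq y)" by (rule polyy_cmul[OF polyy_qq])
  have c: "polyy 2 (\<lambda>x y. ss x y * ss x y)" using polyy_mult[OF polyy_ss polyy_ss] by (simp add: numeral_2_eq_2)
  have d: "polyy 2 (\<lambda>x y. snd x $ i * (RR x * qq y - ss x y * ss x y))" by (rule polyy_cmul[OF polyy_diff[OF b c]])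
  have "polyy 2 (\<lambda>x y. (1 / RR x) * (ss x y * coord y (Some i) - snd x $ i * (RR x * qq y - ss x y * ss x y)))"
    by (rule polyy_cmul[OF polyy_diff[OF a d]])
  then show ?thesis using Some by (rule_tac polyy_cong) (auto simp: Gv_def power2_eq_square algebra_simps)
qed


inductive SM :: "'a::real_normed_vector set \<Rightarrow> ('a \<Rightarrow> real) \<Rightarrow> bool" for U where
  sm_const: "SM U (\<lambda>z. c)"
| sm_lin: "bounded_linear l \<Longrightarrow> SM U l"
| sm_add: "SM U f \<Longrightarrow> SM U g \<Longrightarrow> SM U (\<lambda>z. f z + g z)"
| sm_mul: "SM U f \<Longrightarrow> SM U g \<Longrightarrow> SM U (\<lambda>z. f z * g z)"
| sm_exp: "SM U f \<Longrightarrow> SM U (\<lambda>z. exp (f z))"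
| sm_sqrt: "SM U f \<Longrightarrow> (\<And>z. z \<in> U \<Longrightarrow> f z > 0) \<Longrightarrow> SM U (\<lambda>z. sqrt (f z))"
| sm_inv: "SM U f \<Longrightarrow> (\<And>z. z \<in> U \<Longrightarrow> f z \<noteq> 0) \<Longrightarrow> SM U (\<lambda>z. inverse (f z))"

lemma SM_main:
  assumes "SM U f"
  shows "(\<forall>z\<in>U. \<exists>D. (f has_derivative D) (at z)) \<and>
         (\<forall>v. \<exists>g. SM U g \<and> (\<forall>z\<in>U. ((\<lambda>\<tau>. f (z + \<tau> *\<^sub>R v)) has_real_derivative g z) (at 0)))"
  using assms
proof (induction rule: SM.induct)
  case (sm_const c)
  show ?case by (auto intro!: exI[of _ "\<lambda>z. 0"] SM.sm_const derivative_eq_intros)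
next
  case (sm_lin l)
  have d: "\<exists>D. (l has_derivative D) (at z)" for z
    using bounded_linear_imp_has_derivative[OF sm_lin] by blast
  have "((\<lambda>\<tau>. l (z + \<tau> *\<^sub>R v)) has_real_derivative l v) (at 0)" for z v
  proof -
    have "(\<lambda>\<tau>. l (z + \<tau> *\<^sub>R v)) = (\<lambda>\<tau>. l z + \<tau> * l v)"
      using bounded_linear.linear[OF sm_lin] by (simp add: linear_add linear_scale)
    then show ?thesis by (auto intro!: derivative_eq_intros)
  qed
  then show ?case using d SM.sm_const by blast
next
  case (sm_add f g)
  have d: "\<exists>D. ((\<lambda>z. f z + g z) has_derivative D) (at z)" if zU: "z \<in> U" for z
  proof -
    obtain D1 D2 where "(f has_derivative D1) (at z)" "(g has_derivative D2) (at z)"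
      using sm_add.IH(1)[THEN conjunct1, rule_format, OF zU] sm_add.IH(2)[THEN conjunct1, rule_format, OF zU] by blast
    from has_derivative_add[OF this] show ?thesis by blast
  qed
  have "\<exists>h. SM U h \<and> (\<forall>z\<in>U. ((\<lambda>\<tau>. f (z + \<tau> *\<^sub>R v) + g (z + \<tau> *\<^sub>R v)) has_real_derivative h z) (at 0))" for v
  proof -
    obtain g1 where g1: "SM U g1" "\<forall>z\<in>U. ((\<lambda>\<tau>. f (z + \<tau> *\<^sub>R v)) has_real_derivative g1 z) (at 0)"
      using sm_add.IH(1) by blast
    obtain g2 where g2: "SM U g2" "\<forall>z\<in>U. ((\<lambda>\<tau>. g (z + \<tau> *\<^sub>R v)) has_real_derivative g2 z) (at 0)"
      using sm_add.IH(2) by blast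
    have s: "SM U (\<lambda>z. g1 z + g2 z)" by (rule SM.sm_add[OF g1(1) g2(1)])
    have "((\<lambda>\<tau>. f (z + \<tau> *\<^sub>R v) + g (z + \<tau> *\<^sub>R v)) has_real_derivative g1 z + g2 z) (at 0)" if zU: "z \<in> U" for z
      by (rule DERIV_add[OF g1(2)[rule_format, OF zU] g2(2)[rule_format, OF zU]])
    then show ?thesis using s by blast
  qed
  then show ?case using d by blast
next
  case (sm_mul f g)
  have d: "\<exists>D. ((\<lambda>z. f z * g z) has_derivative D) (at z)" if zU: "z \<in> U" for z
  proof -
    obtain D1 D2 where "(f has_derivative D1) (at z)" "(g has_derivative D2) (at z)"
      using sm_mul.IH(1)[THEN conjunct1, rule_format, OF zU] sm_mul.IH(2)[THEN conjunct1, rule_format, OF zU] by blast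
    from has_derivative_mult[OF this] show ?thesis by blast
  qed
  have "\<exists>h. SM U h \<and> (\<forall>z\<in>U. ((\<lambda>\<tau>. f (z + \<tau> *\<^sub>R v) * g (z + \<tau> *\<^sub>R v)) has_real_derivative h z) (at 0))" for v
  proof -
    obtain g1 where g1: "SM U g1" "\<forall>z\<in>U. ((\<lambda>\<tau>. f (z + \<tau> *\<^sub>R v)) has_real_derivative g1 z) (at 0)"
      using sm_mul.IH(1) by blast
    obtain g2 where g2: "SM U g2" "\<forall>z\<in>U. ((\<lambda>\<tau>. g (z + \<tau> *\<^sub>R v)) has_real_derivative g2 z) (at 0)"
      using sm_mul.IH(2) by blast
    have s: "SM U (\<lambda>z. g1 z * g z + f z * g2 z)"
      by (rule SM.sm_add[OF SM.sm_mul[OF g1(1) sm_mul.hyps(2)] SM.sm_mul[OF sm_mul.hyps(1) g2(1)]])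
    have "((\<lambda>\<tau>. f (z + \<tau> *\<^sub>R v) * g (z + \<tau> *\<^sub>R v)) has_real_derivative g1 z * g z + f z * g2 z) (at 0)" if zU: "z \<in> U" for z
      by (rule DERIV_cong[OF DERIV_mult[OF g1(2)[rule_format, OF zU] g2(2)[rule_format, OF zU]]]) (simp add: algebra_simps)
    then show ?thesis using s by blast
  qed
  then show ?case using d by blast
next
  case (sm_exp f)
  have d: "\<exists>D. ((\<lambda>z. exp (f z)) has_derivative D) (at z)" if zU: "z \<in> U" for z
  proof -
    obtain D1 where "(f has_derivative D1) (at z)" using sm_exp.IH[THEN conjunct1, rule_format, OF zU] by blast
    from DERIV_compose_FDERIV[OF DERIV_exp this] show ?thesis by blast
  qed
  have "\<exists>h. SM U h \<and> (\<forall>z\<in>U. ((\<lambda>\<tau>. exp (f (z + \<tau> *\<^sub>R v))) has_real_derivative h z) (at 0))" for v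
  proof -
    obtain g1 where g1: "SM U g1" "\<forall>z\<in>U. ((\<lambda>\<tau>. f (z + \<tau> *\<^sub>R v)) has_real_derivative g1 z) (at 0)"
      using sm_exp.IH by blast
    have s: "SM U (\<lambda>z. exp (f z) * g1 z)" by (rule SM.sm_mul[OF SM.sm_exp[OF sm_exp.hyps] g1(1)])
    have "((\<lambda>\<tau>. exp (f (z + \<tau> *\<^sub>R v))) has_real_derivative exp (f z) * g1 z) (at 0)" if zU: "z \<in> U" for z
      by (rule DERIV_cong[OF DERIV_chain2[OF DERIV_exp g1(2)[rule_format, OF zU]]]) simp
    then show ?thesis using s by blast
  qed
  then show ?case using d by blast
next
  case (sm_sqrt f)
  have d: "\<exists>D. ((\<lambda>z. sqrt (f z)) has_derivative D) (at z)" if zU: "z \<in> U" for z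
  proof -
    obtain D1 where "(f has_derivative D1) (at z)" using sm_sqrt.IH[THEN conjunct1, rule_format, OF zU] by blast
    from DERIV_compose_FDERIV[OF DERIV_real_sqrt[OF sm_sqrt.hyps(2)[OF zU]] this] show ?thesis by blast
  qed
  have "\<exists>h. SM U h \<and> (\<forall>z\<in>U. ((\<lambda>\<tau>. sqrt (f (z + \<tau> *\<^sub>R v))) has_real_derivative h z) (at 0))" for v
  proof -
    obtain g1 where g1: "SM U g1" "\<forall>z\<in>U. ((\<lambda>\<tau>. f (z + \<tau> *\<^sub>R v)) has_real_derivative g1 z) (at 0)"
      using sm_sqrt.IH by blast
    have s: "SM U (\<lambda>z. g1 z * inverse (2 * sqrt (f z)))"
    proof (rule SM.sm_mul[OF g1(1) SM.sm_inv[OF SM.sm_mul[OF SM.sm_const SM.sm_sqrt[OF sm_sqrt.hyps]]]])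
      fix z assume "z \<in> U" then show "2 * sqrt (f z) \<noteq> 0" using sm_sqrt.hyps(2) by force
    qed
    have "((\<lambda>\<tau>. sqrt (f (z + \<tau> *\<^sub>R v))) has_real_derivative g1 z * inverse (2 * sqrt (f z))) (at 0)" if zU: "z \<in> U" for z
    proof -
      have pz: "0 < f (z + 0 *\<^sub>R v)" using sm_sqrt.hyps(2)[OF zU] by simp
      show ?thesis by (rule DERIV_cong[OF DERIV_chain2[OF DERIV_real_sqrt[OF pz] g1(2)[rule_format, OF zU]]]) (simp add: field_simps)
    qed
    then show ?thesis using s by blast
  qed
  then show ?case using d by blast
next
  case (sm_inv f)
  have d: "\<exists>D. ((\<lambda>z. inverse (f z)) has_derivative D) (at z)" if zU: "z \<in> U" for z
  proof -
    obtain D1 where "(f has_derivative D1) (at z)" using sm_inv.IH[THEN conjunct1, rule_format, OF zU] by blast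
    from DERIV_compose_FDERIV[OF DERIV_inverse[OF sm_inv.hyps(2)[OF zU]] this] show ?thesis by blast
  qed
  have "\<exists>h. SM U h \<and> (\<forall>z\<in>U. ((\<lambda>\<tau>. inverse (f (z + \<tau> *\<^sub>R v))) has_real_derivative h z) (at 0))" for v
  proof -
    obtain g1 where g1: "SM U g1" "\<forall>z\<in>U. ((\<lambda>\<tau>. f (z + \<tau> *\<^sub>R v)) has_real_derivative g1 z) (at 0)"
      using sm_inv.IH by blast
    have s: "SM U (\<lambda>z. (-1) * (g1 z * (inverse (f z) * inverse (f z))))"
      by (rule SM.sm_mul[OF SM.sm_const SM.sm_mul[OF g1(1) SM.sm_mul[OF SM.sm_inv[OF sm_inv.hyps] SM.sm_inv[OF sm_inv.hyps]]]])
    have "((\<lambda>\<tau>. inverse (f (z + \<tau> *\<^sub>R v))) has_real_derivative (-1) * (g1 z * (inverse (f z) * inverse (f z)))) (at 0)" if zU: "z \<in> U" for z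
    proof -
      have pz: "f (z + 0 *\<^sub>R v) \<noteq> 0" using sm_inv.hyps(2)[OF zU] by simp
      show ?thesis by (rule DERIV_cong[OF DERIV_chain2[OF DERIV_inverse[OF pz] g1(2)[rule_format, OF zU]]]) (simp add: field_simps)
    qed
    then show ?thesis using s by blast
  qed
  then show ?case using d by blast
qed


lemma SM_smooth:
  assumes U: "open U" and f: "SM U f"
  shows "smooth_on U f"
proof -
  have it: "\<exists>g. SM U g \<and> (\<forall>z\<in>U. iter_dirder vs f z = g z)" for vs
  proof (induction vs)
    case Nil
    then show ?case using f by auto
  next
    case (Cons v vs)
    then obtain g where g: "SM U g" "\<forall>z\<in>U. iter_dirder vs f z = g z" by blast
    obtain h where h: "SM U h" "\<forall>z\<in>U. ((\<lambda>\<tau>. g (z + \<tau> *\<^sub>R v)) has_real_derivative h z) (at 0)"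
      using SM_main[OF g(1)] by blast
    have "iter_dirder (v # vs) f z = h z" if zU: "z \<in> U" for z
    proof -
      have "iter_dirder (v # vs) f z = deriv (\<lambda>\<tau>. iter_dirder vs f (z + \<tau> *\<^sub>R v)) 0"
        by (simp add: dirder_def)
      also have "\<dots> = deriv (\<lambda>\<tau>. g (z + \<tau> *\<^sub>R v)) 0"
        by (rule deriv_line_local[OF U zU]) (use g(2) in auto)
      also have "\<dots> = h z" by (rule DERIV_imp_deriv[OF h(2)[rule_format, OF zU]])
      finally show ?thesis .
    qed
    then show ?case using h(1) by blast
  qed
  have "iter_dirder vs f differentiable_on U" for vs
  proof -
    obtain g where g: "SM U g" "\<forall>z\<in>U. iter_dirder vs f z = g z" using it by blast
    show ?thesis unfolding differentiable_on_def
    proof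
      fix z assume zU: "z \<in> U"
      obtain D where "(g has_derivative D) (at z)" using SM_main[OF g(1)] zU by blast
      then have "(iter_dirder vs f has_derivative D) (at z)"
        by (rule has_derivative_transform_within_open[OF _ U zU]) (use g(2) in auto)
      then show "iter_dirder vs f differentiable at z within U"
        unfolding differentiable_def using has_derivative_at_withinI by blast
    qed
  qed
  then show ?thesis using U by (simp add: smooth_on_def)
qed

lemma SM_cong: "SM U f \<Longrightarrow> (\<And>z. f z = g z) \<Longrightarrow> SM U g"
proof -
  assume "SM U f" "\<And>z. f z = g z"
  moreover have "f = g" using \<open>\<And>z. f z = g z\<close> by (intro ext)
  ultimately show ?thesis by simp
qed

lemma SM_sum: "finite S \<Longrightarrow> (\<And>i. i \<in> S \<Longrightarrow> SM U (f i)) \<Longrightarrow> SM U (\<lambda>z. \<Sum>i\<in>S. f i z)"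
proof (induction S rule: finite_induct)
  case empty
  then show ?case using SM.sm_const[of U 0] by simp
next
  case (insert i S)
  then show ?case using SM.sm_add[of U "f i" "\<lambda>z. \<Sum>i\<in>S. f i z"] by simp
qed

lemma SM_diff: "SM U f \<Longrightarrow> SM U g \<Longrightarrow> SM U (\<lambda>z. f z - g z)"
  using SM.sm_add[of U f "\<lambda>z. (-1) * g z"] SM.sm_mul[OF SM.sm_const[of U "-1"], of g] by simp

lemma SM_div: "SM U f \<Longrightarrow> SM U g \<Longrightarrow> (\<And>z. z \<in> U \<Longrightarrow> g z \<noteq> 0) \<Longrightarrow> SM U (\<lambda>z. f z / g z)"
  using SM.sm_mul[OF _ SM.sm_inv[of U g]] by (simp add: divide_inverse)

lemma SM_inner:
  fixes l m :: "'a::real_normed_vector \<Rightarrow> real ^ 'n::finite"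
  assumes "bounded_linear l" "bounded_linear m"
  shows "SM U (\<lambda>z. l z \<bullet> m z)"
proof -
  have "SM U (\<lambda>z. \<Sum>i\<in>UNIV. l z $ i * m z $ i)"
  proof (rule SM_sum)
    fix i
    show "SM U (\<lambda>z. l z $ i * m z $ i)"
      by (intro SM.sm_mul SM.sm_lin bounded_linear_compose[OF bounded_linear_vec_nth] assms)
  qed simp
  then show ?thesis by (rule SM_cong) (simp add: inner_vec_def)
qed

lemma bl_fst_fst: "bounded_linear (\<lambda>z::'a::real_normed_vector \<times> 'b::real_normed_vector. fst z)"
  by (rule bounded_linear_fst)


lemma bl_xb: "bounded_linear (\<lambda>z::'n::finite pt \<times> 'n pt. snd (fst z))"
  by (rule bounded_linear_compose[OF bounded_linear_snd bounded_linear_fst])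
lemma bl_yb: "bounded_linear (\<lambda>z::'n::finite pt \<times> 'n pt. snd (snd z))"
  by (rule bounded_linear_compose[OF bounded_linear_snd bounded_linear_snd])
lemma bl_x0: "bounded_linear (\<lambda>z::'n::finite pt \<times> 'n pt. fst (fst z))"
  by (rule bounded_linear_compose[OF bounded_linear_fst bounded_linear_fst])
lemma bl_y0: "bounded_linear (\<lambda>z::'n::finite pt \<times> 'n pt. fst (snd z))"
  by (rule bounded_linear_compose[OF bounded_linear_fst bounded_linear_snd])

context
  fixes U :: "('n::finite pt \<times> 'n pt) set"
  assumes U: "\<And>z. z \<in> U \<Longrightarrow> snd z \<noteq> 0"
begin

lemma SM_RR: "SM U (\<lambda>z. RR (fst z))"
  unfolding RR_def by (intro SM.sm_add SM.sm_const SM_inner bl_xb)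
lemma SM_ss: "SM U (\<lambda>z. ss (fst z) (snd z))"
  unfolding ss_def by (intro SM_inner bl_xb bl_yb)
lemma SM_qq: "SM U (\<lambda>z. qq (snd z))"
  unfolding qq_def by (intro SM_inner bl_yb)
lemma SM_EE: "SM U (\<lambda>z. EE (fst z))"
  unfolding EE_def by (intro SM.sm_exp SM.sm_lin bl_x0)
lemma SM_AA: "SM U (\<lambda>z. AA (fst z) (snd z))"
  unfolding AA_alt power2_eq_square
  by (intro SM_diff SM.sm_add SM.sm_mul SM_RR SM_qq SM_ss SM_EE SM.sm_lin bl_y0)
lemma SM_FF: "SM U (\<lambda>z. FF (fst z) (snd z))"
  unfolding FF_def al_def
  by (intro SM.sm_add SM_div SM.sm_sqrt SM_AA SM_ss SM_RR)
     (auto simp: AA_pos U RR_pos[THEN less_imp_neq, symmetric])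
lemma SM_Fex: "SM U (\<lambda>z. Fex (fst z) (snd z))"
  unfolding Fex_eq by (rule SM_FF)
lemma SM_Pf: "SM U (\<lambda>z. Pf (fst z) (snd z))"
  unfolding Pf_def Nf_def power2_eq_square
  by (intro SM_div SM_diff SM.sm_mul SM.sm_add SM_RR SM_qq SM_ss SM_FF SM.sm_const)
     (auto simp: U FF_pos[THEN less_imp_neq, symmetric] RR_pos[THEN less_imp_neq, symmetric])

end

lemma Pf_hasder:
  assumes y: "y \<noteq> (0::'n::finite pt)"
  shows "\<exists>D. ((\<lambda>z. Pf x z) has_derivative D) (at y)"
proof -
  have sm: "SM (slitTM UNIV) (\<lambda>z::'n pt \<times> 'n pt. Pf (fst z) (snd z))"
    by (rule SM_Pf) (auto simp: slitTM_def)
  have xy: "(x, y) \<in> slitTM UNIV" using y by (simp add: slitTM_def)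
  obtain D where D: "((\<lambda>z. Pf (fst z) (snd z)) has_derivative D) (at (x, y))"
    using SM_main[OF sm, THEN conjunct1, rule_format, OF xy] by blast
  have p: "((\<lambda>z. (x, z)) has_derivative (\<lambda>h. (0, h))) (at y)"
    by (auto intro!: derivative_eq_intros)
  from has_derivative_compose[OF p, of "\<lambda>z. Pf (fst z) (snd z)" D] D
  show ?thesis by auto
qed


lemma line_deriv:
  assumes "(g has_derivative g') (at y)"
  shows "((\<lambda>\<tau>. g (y + \<tau> *\<^sub>R v)) has_real_derivative g' v) (at 0)"
proof -
  have l: "((\<lambda>\<tau>::real. y + \<tau> *\<^sub>R v) has_derivative (\<lambda>h. h *\<^sub>R v)) (at 0)"
    by (auto intro!: derivative_eq_intros)
  have "(g has_derivative g') (at (y + 0 *\<^sub>R v))" using assms by simp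
  from has_derivative_compose[OF l this]
  have "((\<lambda>\<tau>. g (y + \<tau> *\<^sub>R v)) has_derivative (\<lambda>h. g' (h *\<^sub>R v))) (at 0)" .
  moreover have "(\<lambda>h. g' (h *\<^sub>R v)) = (\<lambda>h. g' v * h)"
    using linear_scale[OF has_derivative_linear[OF assms]] by (auto simp: mult.commute)
  ultimately show ?thesis by (simp add: has_field_derivative_def)
qed

lemma euler:
  fixes g :: "'a::real_normed_vector \<Rightarrow> real"
  assumes d: "(g has_derivative g') (at y)" and h: "\<And>c. c > 0 \<Longrightarrow> g (c *\<^sub>R y) = c * g y"
  shows "g' y = g y"
proof -
  have l: "((\<lambda>c::real. c *\<^sub>R y) has_derivative (\<lambda>h. h *\<^sub>R y)) (at 1)"
    by (auto intro!: derivative_eq_intros)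
  have "(g has_derivative g') (at (1 *\<^sub>R y))" using d by simp
  from has_derivative_compose[OF l this]
  have "((\<lambda>c. g (c *\<^sub>R y)) has_derivative (\<lambda>h. g' (h *\<^sub>R y))) (at 1)" .
  moreover have "(\<lambda>h. g' (h *\<^sub>R y)) = (\<lambda>h. g' y * h)"
    using linear_scale[OF has_derivative_linear[OF d]] by (auto simp: mult.commute)
  ultimately have 1: "((\<lambda>c. g (c *\<^sub>R y)) has_real_derivative g' y) (at 1)"
    by (simp add: has_field_derivative_def)
  have "((\<lambda>c::real. c * g y) has_real_derivative g y) (at 1)"
    by (auto intro!: derivative_eq_intros)
  then have "((\<lambda>c::real. c * g y) has_derivative (*) (g y)) (at 1)" by (simp add: has_field_derivative_def)
  then have "((\<lambda>c. g (c *\<^sub>R y)) has_derivative (*) (g y)) (at 1)"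
    by (rule has_derivative_transform_within_open[where s="{0<..}"]) (auto simp: h)
  then have 2: "((\<lambda>c. g (c *\<^sub>R y)) has_real_derivative g y) (at 1)" by (simp add: has_field_derivative_def)
  show ?thesis using DERIV_unique[OF 1 2] .
qed

lemma Nf_hom: "Nf x (c *\<^sub>R y) = c^2 * Nf x y"
  by (simp add: Nf_def qq_def ss_def power2_eq_square algebra_simps diff_divide_distrib add_divide_distrib)

lemma Pf_hom: "c > 0 \<Longrightarrow> Pf x (c *\<^sub>R y) = c * Pf x y"
  by (simp add: Pf_def Nf_hom FF_hom power2_eq_square)

lemma Pf_euler:
  assumes y: "y \<noteq> 0"
  shows "(\<Sum>E\<in>UNIV. py E Pf x y * coord y E) = Pf x y"
proof -
  obtain D where D: "((\<lambda>z. Pf x z) has_derivative D) (at y)" using Pf_hasder[OF y] by blast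
  have "py E Pf x y = D (cbasis E)" for E
    unfolding py_def by (rule DERIV_imp_deriv[OF line_deriv[OF D]])
  then have "(\<Sum>E\<in>UNIV. py E Pf x y * coord y E) = (\<Sum>E\<in>UNIV. D (cbasis E) * coord y E)" by simp
  also have "\<dots> = D y" by (rule linear_basis_sum[OF has_derivative_linear[OF D]])
  also have "\<dots> = Pf x y" by (rule euler[OF D]) (simp add: Pf_hom)
  finally show ?thesis .
qed


lemma geod_split: "y \<noteq> 0 \<Longrightarrow> geod_coeff Fex E x y = coord (Gv x y) E + Pf x y * coord y E"
  by (simp add: geod_closed Hf_def)

lemma douglas_zero:
  assumes y: "y \<noteq> (0::'n::finite pt)"
  shows "douglas Fex A B C D x y = 0"
proof -
  have ex: "\<forall>E::'n option. \<exists>g. polyy (2 - 1) g \<and> (\<forall>x y. ((\<lambda>\<tau>. coord (Gv x (y + \<tau> *\<^sub>R cbasis E)) E) has_real_derivative g x y) (at 0))"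
    using polyy_deriv[OF polyy_Gv] by blast
  obtain gf where gf0: "\<forall>E::'n option. polyy (2 - 1) (gf E) \<and>
      (\<forall>x y. ((\<lambda>\<tau>. coord (Gv x (y + \<tau> *\<^sub>R cbasis E)) E) has_real_derivative gf E x y) (at 0))"
    using choice[OF ex] by blast
  have gf1: "polyy 1 (gf E)" for E using gf0 by simp
  have gfd: "((\<lambda>\<tau>. coord (Gv x (y + \<tau> *\<^sub>R cbasis E)) E) has_real_derivative gf E x y) (at 0)" for E x y
    using gf0 by blast
  define T where "T x y = (\<Sum>E\<in>UNIV. gf E x y)" for x y
  have pT: "polyy 1 T" unfolding T_def by (rule polyy_sum, simp, rule gf1)
  let ?c = "1 / (real CARD('n) + 2)"
  have tr: "(\<Sum>E\<in>UNIV. py E (geod_coeff Fex E) x z) = T x z + (real CARD('n) + 2) * Pf x z" if z: "z \<noteq> 0" for z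
  proof -
    obtain Dp where Dp: "((\<lambda>w. Pf x w) has_derivative Dp) (at z)" using Pf_hasder[OF z] by blast
    have pyP: "py E Pf x z = Dp (cbasis E)" for E
      unfolding py_def by (rule DERIV_imp_deriv[OF line_deriv[OF Dp]])
    have e: "py E (geod_coeff Fex E) x z = gf E x z + (py E Pf x z * coord z E + Pf x z)" for E
    proof -
      have "py E (geod_coeff Fex E) x z = py E (\<lambda>x y. coord (Gv x y) E + Pf x y * coord y E) x z"
        by (rule py_local[OF open_nz]) (auto simp: z geod_split)
      also have "\<dots> = gf E x z + (py E Pf x z * coord z E + Pf x z)"
      proof -
        have "((\<lambda>\<tau>. coord (Gv x (z + \<tau> *\<^sub>R cbasis E)) E + Pf x (z + \<tau> *\<^sub>R cbasis E) * coord (z + \<tau> *\<^sub>R cbasis E) E)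
              has_real_derivative gf E x z + (Dp (cbasis E) * coord z E + Pf x z)) (at 0)"
          unfolding coord_line using line_deriv[OF Dp, of "cbasis E"]
          by (auto intro!: derivative_eq_intros gfd simp: coord_cbasis)
        then have "py E (\<lambda>x y. coord (Gv x y) E + Pf x y * coord y E) x z = gf E x z + (Dp (cbasis E) * coord z E + Pf x z)"
          unfolding py_def by (rule DERIV_imp_deriv)
        then show ?thesis by (simp add: pyP)
      qed
      finally show ?thesis .
    qed
    have "(\<Sum>E\<in>UNIV. py E (geod_coeff Fex E) x z)
        = T x z + (\<Sum>E\<in>UNIV. py E Pf x z * coord z E) + real CARD('n option) * Pf x z"
      by (simp add: e sum.distrib T_def)
    also have "\<dots> = T x z + (real CARD('n) + 2) * Pf x z"
      using Pf_euler[OF z, of x] by (simp add: card_option algebra_simps)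
    finally show ?thesis .
  qed
  define Q2 where "Q2 x y = coord (Gv x y) A - ?c * T x y * coord y A" for x y
  have pQ2: "polyy 2 Q2"
  proof -
    have "polyy 2 (\<lambda>x y. coord (Gv x y) A - (?c * T x y) * coord y A)"
      by (rule polyy_diff[OF polyy_Gv]) (use polyy.pmul[OF polyy_cmul[OF pT, of "\<lambda>x. ?c"], of A] in \<open>simp add: numeral_2_eq_2\<close>)
    then show ?thesis unfolding Q2_def by simp
  qed
  let ?Q = "\<lambda>x y. geod_coeff Fex A x y - 1 / (real CARD('n) + 2) * (\<Sum>E\<in>UNIV. py E (geod_coeff Fex E) x y) * coord y A"
  have QQ: "?Q x z = Q2 x z" if z: "z \<noteq> 0" for z
  proof -
    have n: "real CARD('n) + 2 \<noteq> 0" by simp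
    show ?thesis unfolding tr[OF z] geod_split[OF z] Q2_def using n by (simp add: field_simps)
  qed
  obtain g1 where g1: "polyy 1 g1" "py D Q2 = g1" using polyy_py[of 1 Q2 D] pQ2 by (auto simp: numeral_2_eq_2)
  obtain g0 where g0: "polyy 0 g0" "py C g1 = g0" using polyy_py[of 0 g1 C] g1(1) by auto
  have s1: "py D ?Q x z = g1 x z" if z: "z \<noteq> 0" for z
  proof -
    have "py D ?Q x z = py D Q2 x z" by (rule py_local[OF open_nz], simp add: z, rule QQ, simp)
    then show ?thesis by (simp add: g1(2))
  qed
  have s2: "py C (py D ?Q) x z = g0 x z" if z: "z \<noteq> 0" for z
  proof -
    have "py C (py D ?Q) x z = py C g1 x z" by (rule py_local[OF open_nz], simp add: z, rule s1, simp)
    then show ?thesis by (simp add: g0(2))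
  qed
  have "douglas Fex A B C D x y = py B (py C (py D ?Q)) x y" by (simp add: douglas_def)
  also have "\<dots> = py B g0 x y" by (rule py_local[OF open_nz], simp add: y, rule s2, simp)
  also have "\<dots> = 0" by (rule polyy_py0[OF g0(1)])
  finally show ?thesis .
qed


lemma orth_inner:
  fixes Q :: "real^'n::finite^'n"
  assumes "orthogonal_matrix Q"
  shows "(Q *v a) \<bullet> (Q *v b) = a \<bullet> b"
proof -
  have "orthogonal_transformation ((*v) Q)"
    using orthogonal_transformation_matrix[of "(*v) Q"] assms
    by (simp add: matrix_of_matrix_vector_mul matrix_vector_mul_linear)
  then show ?thesis unfolding orthogonal_transformation_def by blast
qed

theorem mainTheorem7:
  fixes \<rho> :: real
  assumes "CARD('n::finite) \<ge> 3" and "\<rho> > 0"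
  shows "finsler_metric (UNIV \<times> ball (0::real^'n) \<rho>) (Fex :: 'n pt \<Rightarrow> 'n pt \<Rightarrow> real)
       \<and> cyl_symmetric (UNIV \<times> ball (0::real^'n) \<rho>) (Fex :: 'n pt \<Rightarrow> 'n pt \<Rightarrow> real)
       \<and> douglas_vanishes (UNIV \<times> ball (0::real^'n) \<rho>) (Fex :: 'n pt \<Rightarrow> 'n pt \<Rightarrow> real)"
proof (intro conjI)
  let ?M = "UNIV \<times> ball (0::real^'n) \<rho>"
  have oM: "open ?M" by (intro open_Times open_UNIV open_ball)
  have oU: "open (slitTM ?M)" unfolding slitTM_def by (intro open_Times oM open_nz)
  have sm: "smooth_on (slitTM ?M) (\<lambda>z. Fex (fst z) (snd z))"
    by (rule SM_smooth[OF oU SM_Fex]) (auto simp: slitTM_def)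
  show "finsler_metric ?M (Fex :: 'n pt \<Rightarrow> 'n pt \<Rightarrow> real)"
    unfolding finsler_metric_def
    using oM sm fund_pos by (auto simp: Fex_eq FF_nonneg FF_hom)
  show "cyl_symmetric ?M (Fex :: 'n pt \<Rightarrow> 'n pt \<Rightarrow> real)"
    unfolding cyl_symmetric_def
    by (auto simp: Fex_def orth_inner power2_norm_eq_inner)
  show "douglas_vanishes ?M (Fex :: 'n pt \<Rightarrow> 'n pt \<Rightarrow> real)"
    unfolding douglas_vanishes_def using douglas_zero by blast
qed


end
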